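(* Let $a_0,a_1,a_2,b_0,b_1,b_2$ be real numbers and let $(T(n,k))_{n\ge 0,\,k\in\mathbb{Z}}$ be defined by $T(0,0)=1$, $T(n,k)=0$ whenever $k<0$ or $k>n$, and \[ T(n,k)=(a_0+a_1k+a_2n)\,T(n-1,k)+(b_0+b_1k+b_2n)\,T(n-1,k-1)\qquad(n\ge1). \] Then for all integers $0\le k\le n$, \[ T(n,k)=\sum_{1\le p_1<\cdots<p_{n-k}\le n}\ \prod_{i=1}^{n-k}\big((a_2+a_1)p_i-a_1i+a_0\big)\ \prod_{i=1}^{k}\Big(b_0+(b_1+b_2)i+b_2\sum_{j=0}^{i-1}\#\{l: p_l-l=j\}\Big). \]
   Context: The outer sum runs over strictly increasing sequences of $n-k$ integers in $\{1,\dots,n\}$; $\#$ denotes cardinality; empty products equal $1$. *)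

theory Defs
  imports Main "HOL.Real"
begin

fun T :: "real \<Rightarrow> real \<Rightarrow> real \<Rightarrow> real \<Rightarrow> real \<Rightarrow> real \<Rightarrow> nat \<Rightarrow> int \<Rightarrow> real" where
  "T a0 a1 a2 b0 b1 b2 0 k = (if k = 0 then 1 else 0)"
| "T a0 a1 a2 b0 b1 b2 (Suc m) k =
     (if k < 0 \<or> k > int (Suc m) then 0
      else (a0 + a1 * of_int k + a2 * of_nat (Suc m)) * T a0 a1 a2 b0 b1 b2 m k
         + (b0 + b1 * of_int k + b2 * of_nat (Suc m)) * T a0 a1 a2 b0 b1 b2 m (k - 1))"

text \<open>Strictly increasing sequences p_1 < ... < p_m in {1..n}, represented as lists
  (p_i = ps ! (i - 1)).\<close>
definition incseqs :: "nat \<Rightarrow> nat \<Rightarrow> nat list set" where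
  "incseqs m n = {ps. sorted_wrt (<) ps \<and> length ps = m \<and> set ps \<subseteq> {1..n}}"

end

theory Submission
  imports Defs
begin

lemma T_zero: "k < 0 \<or> k > int n \<Longrightarrow> T a0 a1 a2 b0 b1 b2 n k = 0"
  by (induction n arbitrary: k) auto

lemma incseqs_0: "incseqs 0 n = {[]}"
  by (auto simp: incseqs_def)

lemma incseqs_empty: "L > m \<Longrightarrow> incseqs L m = {}"
proof (rule ccontr)
  assume "L > m" "incseqs L m \<noteq> {}"
  then obtain ps where ps: "sorted_wrt (<) ps" "length ps = L" "set ps \<subseteq> {1..m}"
    by (auto simp: incseqs_def)
  then have "distinct ps" by (simp add: strict_sorted_iff)
  then have "card (set ps) = L" using ps by (simp add: distinct_card)
  moreover have "card (set ps) \<le> m" using card_mono[OF _ ps(3)] by simp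
  ultimately show False using \<open>L > m\<close> by simp
qed

lemma incseqs_Suc:
  assumes "L \<ge> 1"
  shows "incseqs L (Suc m) = incseqs L m \<union> (\<lambda>qs. qs @ [Suc m]) ` incseqs (L-1) m"
proof
  show "incseqs L (Suc m) \<subseteq> incseqs L m \<union> (\<lambda>qs. qs @ [Suc m]) ` incseqs (L-1) m"
  proof
    fix ps assume ps: "ps \<in> incseqs L (Suc m)"
    show "ps \<in> incseqs L m \<union> (\<lambda>qs. qs @ [Suc m]) ` incseqs (L-1) m"
    proof (cases "Suc m \<in> set ps")
      case False
      then show ?thesis using ps by (auto simp: incseqs_def le_Suc_eq)
    next
      case True
      have "ps \<noteq> []" using True by auto
      then obtain qs x where qs: "ps = qs @ [x]" by (metis rev_exhaust)
      have s: "sorted_wrt (<) qs" "\<forall>y\<in>set qs. y < x" "x \<le> Suc m" "set qs \<subseteq> {1..Suc m}"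
        using ps qs by (auto simp: incseqs_def sorted_wrt_append)
      have "x = Suc m" using True s qs by fastforce
      then have "qs \<in> incseqs (L-1) m" using s ps qs by (force simp: incseqs_def)
      then show ?thesis using qs \<open>x = Suc m\<close> by blast
    qed
  qed
  show "incseqs L m \<union> (\<lambda>qs. qs @ [Suc m]) ` incseqs (L-1) m \<subseteq> incseqs L (Suc m)"
    using assms by (force simp: incseqs_def sorted_wrt_append)
qed

lemma upper: "sorted_wrt (<) ps \<Longrightarrow> set ps \<subseteq> {..m} \<Longrightarrow> i < length ps \<Longrightarrow> ps!i + length ps \<le> i + m + 1"
proof (induction ps arbitrary: m i rule: rev_induct)
  case Nil then show ?case by simp
next
  case (snoc x xs)
  show ?case
  proof (cases "i < length xs")
    case True
    have "set xs \<subseteq> {..x - 1}" using snoc.prems by (force simp: sorted_wrt_append)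
    then have "xs!i + length xs \<le> i + (x-1) + 1" using snoc True by (simp add: sorted_wrt_append)
    moreover have "x \<le> m" using snoc.prems by auto
    moreover have "xs!i < x" using True snoc.prems nth_mem by (auto simp: sorted_wrt_append)
    then have "x \<ge> 1" by simp
    ultimately show ?thesis using True by (simp add: nth_append)
  next
    case False
    then have "i = length xs" using snoc.prems by simp
    then show ?thesis using snoc.prems by (simp add: nth_append)
  qed
qed

lemma lower: "sorted_wrt (<) ps \<Longrightarrow> set ps \<subseteq> {a..} \<Longrightarrow> i < length ps \<Longrightarrow> a + i \<le> ps!i"
proof (induction ps arbitrary: a i)
  case Nil then show ?case by simp
next
  case (Cons x xs)
  show ?case
  proof (cases i)
    case 0 then show ?thesis using Cons.prems by simp
  next
    case (Suc i')
    have "set xs \<subseteq> {Suc x..}" using Cons.prems by force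
    then have "Suc x + i' \<le> xs!i'" using Cons.IH[of "Suc x" i'] Cons.prems Suc by simp
    then show ?thesis using Suc Cons.prems by simp
  qed
qed


definition Cnt :: "nat \<Rightarrow> nat list \<Rightarrow> nat \<Rightarrow> nat" where
  "Cnt L ps j = card {l \<in> {1..L}. int (ps ! (l - 1)) - int l = int j}"

lemma cnt_sum:
  assumes ps: "ps \<in> incseqs L m" and Lk: "L + k' = m"
  shows "(\<Sum>j<Suc k'. Cnt L ps j) = L"
proof -
  have sw: "sorted_wrt (<) ps" "length ps = L" "set ps \<subseteq> {1..m}" using ps by (auto simp: incseqs_def)
  have "(\<Sum>j<Suc k'. Cnt L ps j) = card (\<Union>j<Suc k'. {l \<in> {1..L}. int (ps ! (l - 1)) - int l = int j})"
    unfolding Cnt_def by (rule card_UN_disjoint[symmetric]) auto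
  also have "(\<Union>j<Suc k'. {l \<in> {1..L}. int (ps ! (l - 1)) - int l = int j}) = {1..L}"
  proof (rule set_eqI, rule iffI)
    fix l assume l: "l \<in> {1..L}"
    have s1: "set ps \<subseteq> {1..}" using sw(3) by auto
    have lo: "1 + (l-1) \<le> ps!(l-1)" using lower[OF sw(1) s1, of "l-1"] sw l by auto
    have s2: "set ps \<subseteq> {..m}" using sw(3) by auto
    have up: "ps!(l-1) + L \<le> (l-1) + m + 1" using upper[OF sw(1) s2, of "l-1"] sw l by auto
    show "l \<in> (\<Union>j<Suc k'. {l \<in> {1..L}. int (ps ! (l - 1)) - int l = int j})"
      using l lo up Lk by (auto intro!: bexI[of _ "ps!(l-1) - l"])
  qed auto
  finally show ?thesis by simp
qed

lemma cnt_snoc: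
  assumes "length qs = L'" "int N - int (Suc L') \<noteq> int j"
  shows "Cnt (Suc L') (qs @ [N]) j = Cnt L' qs j"
proof -
  have "{l \<in> {1..Suc L'}. int ((qs @ [N]) ! (l - 1)) - int l = int j}
      = {l \<in> {1..L'}. int (qs ! (l - 1)) - int l = int j}"
    using assms by (auto simp: nth_append le_Suc_eq)
  then show ?thesis unfolding Cnt_def by simp
qed

context fixes a0 a1 a2 b0 b1 b2 :: real
begin

definition Pa :: "nat \<Rightarrow> nat list \<Rightarrow> real" where
  "Pa L ps = (\<Prod>i = 1..L. (a2 + a1) * real (ps ! (i - 1)) - a1 * real i + a0)"

definition Pb :: "nat \<Rightarrow> nat \<Rightarrow> nat list \<Rightarrow> real" where
  "Pb L k ps = (\<Prod>i = 1..k. b0 + (b1 + b2) * real i + b2 * (\<Sum>j < i. real (Cnt L ps j)))"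

definition G :: "nat \<Rightarrow> nat \<Rightarrow> real" where
  "G n k = (\<Sum>ps \<in> incseqs (n - k) n. Pa (n - k) ps * Pb (n - k) k ps)"

lemma Pa_snoc: "length qs = L' \<Longrightarrow>
  Pa (Suc L') (qs @ [N]) = Pa L' qs * ((a2 + a1) * real N - a1 * real (Suc L') + a0)"
proof -
  assume len: "length qs = L'"
  have "(\<Prod>i = 1..L'. (a2 + a1) * real ((qs @ [N]) ! (i - 1)) - a1 * real i + a0)
      = (\<Prod>i = 1..L'. (a2 + a1) * real (qs ! (i - 1)) - a1 * real i + a0)"
    using len by (intro prod.cong refl) (auto simp: nth_append)
  then show ?thesis unfolding Pa_def using len by (simp add: prod.cl_ivl_Suc nth_append)
qed

lemma Pb_snoc: "length qs = L' \<Longrightarrow> N = L' + k + 1 \<Longrightarrow>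
  Pb (Suc L') k (qs @ [N]) = Pb L' k qs"
proof -
  assume a: "length qs = L'" "N = L' + k + 1"
  have "\<And>i j. i \<in> {1..k} \<Longrightarrow> j \<in> {..<i} \<Longrightarrow> Cnt (Suc L') (qs @ [N]) j = Cnt L' qs j"
    using a by (intro cnt_snoc) auto
  then show ?thesis unfolding Pb_def
    by (intro prod.cong refl) (metis (no_types, lifting) sum.cong)
qed

lemma Pb_last: "ps \<in> incseqs L m \<Longrightarrow> L + k' = m \<Longrightarrow>
  Pb L (Suc k') ps = Pb L k' ps * (b0 + b1 * real (Suc k') + b2 * real (Suc m))"
proof -
  assume a: "ps \<in> incseqs L m" "L + k' = m"
  have "(\<Sum>j<Suc k'. real (Cnt L ps j)) = real L"
    using cnt_sum[OF a] by (metis of_nat_sum)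
  moreover have "Pb L (Suc k') ps = Pb L k' ps *
     (b0 + (b1 + b2) * real (Suc k') + b2 * (\<Sum>j<Suc k'. real (Cnt L ps j)))"
    unfolding Pb_def by (simp only: prod.cl_ivl_Suc) simp
  moreover have "real (Suc m) = real L + real (Suc k')" using a(2) by simp
  ultimately show ?thesis by (simp add: algebra_simps)
qed

lemma part1:
  assumes "k' \<le> m"
  shows "(\<Sum>ps\<in>incseqs (m - k') m. Pa (m - k') ps * Pb (m - k') (Suc k') ps)
     = (b0 + b1 * real (Suc k') + b2 * real (Suc m)) * G m k'"
  unfolding G_def sum_distrib_left
  by (intro sum.cong refl) (simp add: Pb_last[OF _ ] assms)

lemma part2:
  assumes "k \<le> m"
  shows "(\<Sum>qs\<in>incseqs (m - k) m. Pa (Suc (m - k)) (qs @ [Suc m]) * Pb (Suc (m - k)) k (qs @ [Suc m]))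
     = (a0 + a1 * real k + a2 * real (Suc m)) * G m k"
  unfolding G_def sum_distrib_left
proof (intro sum.cong refl)
  fix qs assume q: "qs \<in> incseqs (m - k) m"
  then have len: "length qs = m - k" by (simp add: incseqs_def)
  have e: "(a2 + a1) * real (Suc m) - a1 * real (Suc (m - k)) + a0 = a0 + a1 * real k + a2 * real (Suc m)"
    using assms by (simp add: of_nat_diff algebra_simps)
  show "Pa (Suc (m - k)) (qs @ [Suc m]) * Pb (Suc (m - k)) k (qs @ [Suc m]) =
    (a0 + a1 * real k + a2 * real (Suc m)) * (Pa (m - k) qs * Pb (m - k) k qs)"
    using Pa_snoc[OF len, of "Suc m"] Pb_snoc[OF len, of "Suc m" k] assms e by simp
qed

lemma G_split:
  assumes "k \<le> m"
  shows "G (Suc m) k = (\<Sum>ps\<in>incseqs (Suc m - k) m. Pa (Suc m - k) ps * Pb (Suc m - k) k ps)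
     + (a0 + a1 * real k + a2 * real (Suc m)) * G m k"
proof -
  have L: "Suc m - k = Suc (m - k)" using assms by simp
  have U: "incseqs (Suc m - k) (Suc m) = incseqs (Suc m - k) m \<union> (\<lambda>qs. qs @ [Suc m]) ` incseqs (m - k) m"
    using incseqs_Suc[of "Suc m - k" m] L by simp
  have D: "incseqs (Suc m - k) m \<inter> (\<lambda>qs. qs @ [Suc m]) ` incseqs (m - k) m = {}"
    by (auto simp: incseqs_def)
  have fin: "finite (incseqs L n)" for L n
  proof -
    have "incseqs L n \<subseteq> {xs. set xs \<subseteq> {1..n} \<and> length xs = L}" by (auto simp: incseqs_def)
    then show ?thesis using finite_lists_length_eq[of "{1..n}" L] finite_subset by blast
  qed
  have "G (Suc m) k = (\<Sum>ps\<in>incseqs (Suc m - k) m. Pa (Suc m - k) ps * Pb (Suc m - k) k ps)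
     + (\<Sum>ps\<in>(\<lambda>qs. qs @ [Suc m]) ` incseqs (m - k) m. Pa (Suc m - k) ps * Pb (Suc m - k) k ps)"
    unfolding G_def U by (rule sum.union_disjoint[OF fin _ D]) (simp add: fin)
  also have "(\<Sum>ps\<in>(\<lambda>qs. qs @ [Suc m]) ` incseqs (m - k) m. Pa (Suc m - k) ps * Pb (Suc m - k) k ps)
     = (\<Sum>qs\<in>incseqs (m - k) m. Pa (Suc (m - k)) (qs @ [Suc m]) * Pb (Suc (m - k)) k (qs @ [Suc m]))"
    by (subst sum.reindex) (auto simp: inj_on_def L)
  also have "\<dots> = (a0 + a1 * real k + a2 * real (Suc m)) * G m k" by (rule part2[OF assms])
  finally show ?thesis .
qed

lemma T_eq_G: "k \<le> n \<Longrightarrow> T a0 a1 a2 b0 b1 b2 n (int k) = G n k"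
proof (induction n arbitrary: k)
  case 0
  then show ?case by (simp add: G_def incseqs_0 Pa_def Pb_def)
next
  case (Suc m)
  have rec: "T a0 a1 a2 b0 b1 b2 (Suc m) (int k) =
     (a0 + a1 * real k + a2 * real (Suc m)) * T a0 a1 a2 b0 b1 b2 m (int k)
     + (b0 + b1 * real k + b2 * real (Suc m)) * T a0 a1 a2 b0 b1 b2 m (int k - 1)"
    using Suc.prems by simp
  show ?case
  proof (cases "k = Suc m")
    case True
    have "T a0 a1 a2 b0 b1 b2 m (int k) = 0" using True by (intro T_zero) simp
    moreover have "int k - 1 = int m" using True by simp
    moreover have "G (Suc m) k = (b0 + b1 * real (Suc m) + b2 * real (Suc m)) * G m m"
      using part1[of m m] True by (simp add: G_def incseqs_0)
    ultimately show ?thesis using rec Suc.IH[of m] True by simp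
  next
    case False
    then have km: "k \<le> m" using Suc.prems by simp
    show ?thesis
    proof (cases k)
      case 0
      have "T a0 a1 a2 b0 b1 b2 m (int k - 1) = 0" using 0 by (intro T_zero) simp
      moreover have "incseqs (Suc m - k) m = {}" using 0 by (intro incseqs_empty) simp
      ultimately show ?thesis using rec G_split[OF km] Suc.IH[OF km] by simp
    next
      case (Suc k')
      have "int k - 1 = int k'" using Suc by simp
      moreover have "(\<Sum>ps\<in>incseqs (Suc m - k) m. Pa (Suc m - k) ps * Pb (Suc m - k) k ps)
         = (b0 + b1 * real k + b2 * real (Suc m)) * G m k'"
        using part1[of k' m] Suc km by simp
      ultimately show ?thesis using rec G_split[OF km] Suc.IH[OF km] Suc.IH[of k'] Suc km by simp
    qed
  qed
qed

end

theorem mainTheorem5: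
  fixes a0 a1 a2 b0 b1 b2 :: real and n k :: nat
  assumes "k \<le> n"
  shows "T a0 a1 a2 b0 b1 b2 n (int k) =
    (\<Sum>ps \<in> incseqs (n - k) n.
       (\<Prod>i = 1..n - k. (a2 + a1) * real (ps ! (i - 1)) - a1 * real i + a0) *
       (\<Prod>i = 1..k. b0 + (b1 + b2) * real i +
          b2 * (\<Sum>j < i. real (card {l \<in> {1..n - k}. int (ps ! (l - 1)) - int l = int j}))))"
  using T_eq_G[OF assms] unfolding G_def Pa_def Pb_def Cnt_def .

end
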